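(* Let $0<\epsilon<1$ and let $(G,\lambda^\mu),(G,\lambda^\nu)$ be two hardcore models on $G=(V,E)$, $n=|V|$, with Gibbs distributions $\mu,\nu$, both satisfying the uniqueness condition, with $D:=d_{\mathrm{par}}(\mu,\nu)<\theta:=10^{-10}\frac{\epsilon^{1/4}}{n^{5/2}}$. Let $\kappa=10^{-9}\frac{\epsilon^{1/4}}{n^{3/2}}$, $B=\{v:\min\{\lambda^\mu_v,\lambda^\nu_v\}\ge\kappa\}$, $S=V\setminus B$, and $\Omega_B\subseteq\{\pm1\}^B$ the support of both $\mu_B$ and $\nu_B$. Then for every $x\in\Omega_B$, $d_{TV}(\nu^x_S,\mu^x_S)\le4nD$.
   Context: Hardcore model $(G,\lambda)$: weight on $\sigma\in\{-1,+1\}^V$ is $\prod_{v:\sigma_v=+1}\lambda_v$ if $\{v:\sigma_v=+1\}$ is independent, else $0$; Gibbs distribution is the normalized weight. Uniqueness condition: $\lambda_v\le(1-\eta)\frac{(\Delta-1)^{\Delta-1}}{(\Delta-2)^\Delta}$ for all $v$ for a constant $\eta\in(0,1)$, $\Delta\ge3$ the maximum degree. $d_{\mathrm{par}}(\mu,\nu)=\max_v|\lambda^\mu_v-\lambda^\nu_v|$. $\mu_B$ is the marginal on $B$; $\mu^x_S$ is the distribution on $\{\pm1\}^S$ of $\mu$ conditioned on $x$ on $B$ (similarly for $\nu$). *)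

theory Defs
  imports "HOL-Analysis.Analysis"
begin

definition simple_graph :: "'v set \<Rightarrow> ('v \<Rightarrow> 'v \<Rightarrow> bool) \<Rightarrow> bool" where
  "simple_graph V E \<longleftrightarrow> finite V \<and> (\<forall>u v. E u v \<longrightarrow> u \<in> V \<and> v \<in> V)
     \<and> (\<forall>u v. E u v \<longrightarrow> E v u) \<and> (\<forall>v. \<not> E v v)"

definition degree :: "'v set \<Rightarrow> ('v \<Rightarrow> 'v \<Rightarrow> bool) \<Rightarrow> 'v \<Rightarrow> nat" where
  "degree V E v = card {u \<in> V. E v u}"

definition max_degree :: "'v set \<Rightarrow> ('v \<Rightarrow> 'v \<Rightarrow> bool) \<Rightarrow> nat" where
  "max_degree V E = Max (degree V E ` V)"

definition spins :: "'v set \<Rightarrow> ('v \<Rightarrow> int) set" where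
  "spins A = PiE A (\<lambda>_. {-1, 1})"

definition indep_set :: "('v \<Rightarrow> 'v \<Rightarrow> bool) \<Rightarrow> 'v set \<Rightarrow> bool" where
  "indep_set E I \<longleftrightarrow> (\<forall>u\<in>I. \<forall>v\<in>I. \<not> E u v)"

definition hc_weight :: "'v set \<Rightarrow> ('v \<Rightarrow> 'v \<Rightarrow> bool) \<Rightarrow> ('v \<Rightarrow> real) \<Rightarrow> ('v \<Rightarrow> int) \<Rightarrow> real" where
  "hc_weight V E lam \<sigma> =
     (if indep_set E {v \<in> V. \<sigma> v = 1} then (\<Prod>v\<in>{v \<in> V. \<sigma> v = 1}. lam v) else 0)"

definition hc_partition :: "'v set \<Rightarrow> ('v \<Rightarrow> 'v \<Rightarrow> bool) \<Rightarrow> ('v \<Rightarrow> real) \<Rightarrow> real" where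
  "hc_partition V E lam = (\<Sum>\<sigma>\<in>spins V. hc_weight V E lam \<sigma>)"

definition gibbs :: "'v set \<Rightarrow> ('v \<Rightarrow> 'v \<Rightarrow> bool) \<Rightarrow> ('v \<Rightarrow> real) \<Rightarrow> ('v \<Rightarrow> int) \<Rightarrow> real" where
  "gibbs V E lam \<sigma> = hc_weight V E lam \<sigma> / hc_partition V E lam"

definition marginal :: "'v set \<Rightarrow> (('v \<Rightarrow> int) \<Rightarrow> real) \<Rightarrow> 'v set \<Rightarrow> ('v \<Rightarrow> int) \<Rightarrow> real" where
  "marginal V mu B x = (\<Sum>\<sigma>\<in>{\<sigma> \<in> spins V. restrict \<sigma> B = x}. mu \<sigma>)"

definition conditional :: "'v set \<Rightarrow> (('v \<Rightarrow> int) \<Rightarrow> real) \<Rightarrow> 'v set \<Rightarrow> ('v \<Rightarrow> int) \<Rightarrow> 'v set \<Rightarrow> ('v \<Rightarrow> int) \<Rightarrow> real" where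
  "conditional V mu B x S y =
     (\<Sum>\<sigma>\<in>{\<sigma> \<in> spins V. restrict \<sigma> B = x \<and> restrict \<sigma> S = y}. mu \<sigma>) / marginal V mu B x"

definition dtv :: "'a set \<Rightarrow> ('a \<Rightarrow> real) \<Rightarrow> ('a \<Rightarrow> real) \<Rightarrow> real" where
  "dtv Omega p q = (1/2) * (\<Sum>\<omega>\<in>Omega. \<bar>p \<omega> - q \<omega>\<bar>)"

definition d_par :: "'v set \<Rightarrow> ('v \<Rightarrow> real) \<Rightarrow> ('v \<Rightarrow> real) \<Rightarrow> real" where
  "d_par V lam1 lam2 = Max ((\<lambda>v. \<bar>lam1 v - lam2 v\<bar>) ` V)"

definition uniqueness :: "'v set \<Rightarrow> ('v \<Rightarrow> 'v \<Rightarrow> bool) \<Rightarrow> real \<Rightarrow> ('v \<Rightarrow> real) \<Rightarrow> bool" where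
  "uniqueness V E eta lam \<longleftrightarrow>
     (\<forall>v\<in>V. lam v \<le> (1 - eta) * (real (max_degree V E) - 1) ^ (max_degree V E - 1)
                          / (real (max_degree V E) - 2) ^ (max_degree V E))"

end

theory Submission
  imports Defs
begin


lemma tv_bound:
  fixes p q :: "'a \<Rightarrow> real"
  assumes fin: "finite \<Omega>" and qnn: "\<forall>w\<in>\<Omega>. q w \<ge> 0" and P1: "sum p \<Omega> \<ge> 1" and Qp: "sum q \<Omega> > 0"
  shows "(1/2) * (\<Sum>w\<in>\<Omega>. \<bar>p w / sum p \<Omega> - q w / sum q \<Omega>\<bar>) \<le> (\<Sum>w\<in>\<Omega>. \<bar>p w - q w\<bar>)"
proof -
  define P where "P = sum p \<Omega>"
  define Q where "Q = sum q \<Omega>"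
  have PP: "P \<ge> 1" "P > 0" using P1 P_def by auto
  have QP: "Q > 0" using Qp Q_def by auto
  have pt: "\<bar>p w / P - q w / Q\<bar> \<le> \<bar>p w - q w\<bar> / P + q w * (\<bar>Q - P\<bar> / (P * Q))" if "w \<in> \<Omega>" for w
  proof -
    have "p w / P - q w / Q = (p w - q w) / P + q w * ((Q - P) / (P * Q))"
      using PP QP by (simp add: field_simps)
    also have "\<bar>\<dots>\<bar> \<le> \<bar>(p w - q w) / P\<bar> + \<bar>q w * ((Q - P) / (P * Q))\<bar>" by (rule abs_triangle_ineq)
    also have "\<dots> = \<bar>p w - q w\<bar> / P + q w * (\<bar>Q - P\<bar> / (P * Q))"
      using PP QP qnn that by (simp add: abs_mult abs_divide)
    finally show ?thesis .
  qed
  have "(\<Sum>w\<in>\<Omega>. \<bar>p w / P - q w / Q\<bar>) \<le> (\<Sum>w\<in>\<Omega>. \<bar>p w - q w\<bar> / P + q w * (\<bar>Q - P\<bar> / (P * Q)))"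
    by (rule sum_mono) (use pt in auto)
  also have "\<dots> = (\<Sum>w\<in>\<Omega>. \<bar>p w - q w\<bar>) / P + Q * (\<bar>Q - P\<bar> / (P * Q))"
    by (simp add: sum.distrib sum_divide_distrib sum_distrib_right Q_def)
  also have "\<dots> = (\<Sum>w\<in>\<Omega>. \<bar>p w - q w\<bar>) / P + \<bar>Q - P\<bar> / P"
    using QP by simp
  also have "\<bar>Q - P\<bar> \<le> (\<Sum>w\<in>\<Omega>. \<bar>p w - q w\<bar>)"
  proof -
    have "Q - P = (\<Sum>w\<in>\<Omega>. q w - p w)" by (simp add: Q_def P_def sum_subtractf)
    then have "\<bar>Q - P\<bar> \<le> (\<Sum>w\<in>\<Omega>. \<bar>q w - p w\<bar>)" by (metis sum_abs)
    then show ?thesis by (simp add: abs_minus_commute)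
  qed
  then have "(\<Sum>w\<in>\<Omega>. \<bar>p w - q w\<bar>) / P + \<bar>Q - P\<bar> / P \<le> 2 * (\<Sum>w\<in>\<Omega>. \<bar>p w - q w\<bar>) / P"
    using PP by (simp add: divide_right_mono add_divide_distrib[symmetric])
  also have "\<dots> \<le> 2 * (\<Sum>w\<in>\<Omega>. \<bar>p w - q w\<bar>)"
  proof -
    have nn: "0 \<le> (\<Sum>w\<in>\<Omega>. \<bar>p w - q w\<bar>)" by (simp add: sum_nonneg)
    have "2 * (\<Sum>w\<in>\<Omega>. \<bar>p w - q w\<bar>) / P \<le> 2 * (\<Sum>w\<in>\<Omega>. \<bar>p w - q w\<bar>) / 1"
      using PP nn by (intro divide_left_mono) auto
    then show ?thesis by simp
  qed
  finally have F: "(\<Sum>w\<in>\<Omega>. \<bar>p w / P - q w / Q\<bar>) \<le> 2 * (\<Sum>w\<in>\<Omega>. \<bar>p w - q w\<bar>)" .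
  show ?thesis using F unfolding P_def Q_def by linarith
qed


lemma pow_sum_bound:
  fixes a b :: "'a \<Rightarrow> real" and c D :: real
  assumes "finite S" "\<forall>v\<in>S. 0 \<le> a v \<and> a v \<le> c \<and> 0 \<le> b v \<and> b v \<le> c \<and> \<bar>a v - b v\<bar> \<le> D"
    "0 \<le> D" "0 \<le> c"
  shows "(\<Sum>Y\<in>Pow S. \<bar>prod a Y - prod b Y\<bar>) \<le> real (card S) * D * (1+c)^card S"
  using assms
proof (induction S rule: finite_induct)
  case empty
  then show ?case by simp
next
  case (insert u F)
  define k where "k = card F"
  have IH: "(\<Sum>Y\<in>Pow F. \<bar>prod a Y - prod b Y\<bar>) \<le> real k * D * (1+c)^k"
    using insert k_def by auto
  have au: "0 \<le> a u" "a u \<le> c" "0 \<le> b u" "b u \<le> c" "\<bar>a u - b u\<bar> \<le> D" using insert.prems by auto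
  have disj: "Pow F \<inter> insert u ` Pow F = {}" using insert.hyps by auto
  have inj: "inj_on (insert u) (Pow F)"
  proof (rule inj_onI)
    fix X Y assume XY: "X \<in> Pow F" "Y \<in> Pow F" "insert u X = insert u Y"
    then have "u \<notin> X" "u \<notin> Y" using insert.hyps by auto
    moreover have "insert u X - {u} = insert u Y - {u}" using XY by simp
    ultimately show "X = Y" by simp
  qed
  define T where "T = (\<Sum>Y\<in>Pow F. \<bar>prod a Y - prod b Y\<bar>)"
  have s1: "(\<Sum>Y\<in>Pow (insert u F). \<bar>prod a Y - prod b Y\<bar>)
      = T + (\<Sum>Y\<in>insert u ` Pow F. \<bar>prod a Y - prod b Y\<bar>)"
    unfolding Pow_insert T_def using disj insert.hyps by (intro sum.union_disjoint) auto
  have s2: "(\<Sum>Y\<in>insert u ` Pow F. \<bar>prod a Y - prod b Y\<bar>)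
      = (\<Sum>Y\<in>Pow F. \<bar>a u * prod a Y - b u * prod b Y\<bar>)"
  proof -
    have "(\<Sum>Y\<in>insert u ` Pow F. \<bar>prod a Y - prod b Y\<bar>) = (\<Sum>Y\<in>Pow F. \<bar>prod a (insert u Y) - prod b (insert u Y)\<bar>)"
      using inj by (simp add: sum.reindex)
    also have "\<dots> = (\<Sum>Y\<in>Pow F. \<bar>a u * prod a Y - b u * prod b Y\<bar>)"
    proof (rule sum.cong)
      fix Y assume Y: "Y \<in> Pow F"
      then have fY: "finite Y" "u \<notin> Y" using insert.hyps finite_subset by auto
      show "\<bar>prod a (insert u Y) - prod b (insert u Y)\<bar> = \<bar>a u * prod a Y - b u * prod b Y\<bar>"
        using fY by simp
    qed simp
    finally show ?thesis .
  qed
  have s3: "(\<Sum>Y\<in>Pow F. \<bar>a u * prod a Y - b u * prod b Y\<bar>) \<le> (\<Sum>Y\<in>Pow F. D * prod a Y + c * \<bar>prod a Y - prod b Y\<bar>)"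
  proof (rule sum_mono)
    fix Y assume Y: "Y \<in> Pow F"
    have A0: "0 \<le> prod a Y" using Y insert.prems by (auto intro!: prod_nonneg)
    have "a u * prod a Y - b u * prod b Y = (a u - b u) * prod a Y + b u * (prod a Y - prod b Y)"
      by (simp add: algebra_simps)
    also have "\<bar>\<dots>\<bar> \<le> \<bar>a u - b u\<bar> * prod a Y + b u * \<bar>prod a Y - prod b Y\<bar>"
      using A0 au by (metis abs_mult abs_of_nonneg abs_triangle_ineq)
    also have "\<dots> \<le> D * prod a Y + c * \<bar>prod a Y - prod b Y\<bar>"
      using A0 au by (intro add_mono mult_right_mono) auto
    finally show "\<bar>a u * prod a Y - b u * prod b Y\<bar> \<le> D * prod a Y + c * \<bar>prod a Y - prod b Y\<bar>" .
  qed
  have s4: "(\<Sum>Y\<in>Pow F. D * prod a Y + c * \<bar>prod a Y - prod b Y\<bar>) = D * (\<Sum>Y\<in>Pow F. prod a Y) + c * T"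
    by (simp add: sum.distrib sum_distrib_left T_def)
  have "(\<Sum>Y\<in>Pow F. prod a Y) = (\<Prod>v\<in>F. a v + 1)"
    using prod_add[of F a "\<lambda>_. 1"] insert.hyps by simp
  also have "(\<Prod>v\<in>F. a v + 1) \<le> (\<Prod>v\<in>F. 1 + c)"
    using insert.prems by (intro prod_mono) auto
  also have "(\<Prod>v\<in>F. 1 + c) = (1+c)^k" by (simp add: k_def)
  finally have s5: "(\<Sum>Y\<in>Pow F. prod a Y) \<le> (1+c)^k" .
  have s6: "D * (\<Sum>Y\<in>Pow F. prod a Y) \<le> D * (1+c)^k" using s5 insert.prems(2) by (rule mult_left_mono)
  have "(\<Sum>Y\<in>Pow (insert u F). \<bar>prod a Y - prod b Y\<bar>) \<le> (1 + c) * T + D * (1+c)^k"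
    using s1 s2 s3 s4 s6 by (simp add: algebra_simps)
  also have "\<dots> \<le> (1 + c) * (real k * D * (1+c)^k) + D * (1+c)^(Suc k)"
  proof (rule add_mono)
    show "(1 + c) * T \<le> (1 + c) * (real k * D * (1+c)^k)"
      using IH insert.prems unfolding T_def by (intro mult_left_mono) auto
    have "(1+c)^k \<le> (1+c)^Suc k" using insert.prems by (intro power_increasing) auto
    then show "D * (1+c)^k \<le> D * (1+c)^(Suc k)" using insert.prems by (intro mult_left_mono) auto
  qed
  also have "\<dots> = real (Suc k) * D * (1+c)^(Suc k)" by (simp add: algebra_simps)
  finally show ?case using insert.hyps k_def by simp
qed



definition hh :: "('v \<Rightarrow> 'v \<Rightarrow> bool) \<Rightarrow> 'v set \<Rightarrow> 'v set \<Rightarrow> ('v \<Rightarrow> int) \<Rightarrow> ('v \<Rightarrow> real) \<Rightarrow> ('v \<Rightarrow> int) \<Rightarrow> real" where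
  "hh E B S x lam y = (if indep_set E ({v\<in>B. x v = 1} \<union> {v\<in>S. y v = 1}) then prod lam {v\<in>S. y v = 1} else 0)"

lemma cond_repr:
  fixes V B S :: "'v set" and x :: "'v \<Rightarrow> int" and lam :: "'v \<Rightarrow> real"
  assumes graph: "simple_graph V E" and BV: "B \<subseteq> V" and S_def: "S = V - B"
    and x: "x \<in> spins B" and pos: "\<forall>v\<in>V. lam v > 0"
    and supp: "marginal V (gibbs V E lam) B x > 0"
  shows "\<forall>y\<in>spins S. conditional V (gibbs V E lam) B x S y = hh E B S x lam y / (\<Sum>y'\<in>spins S. hh E B S x lam y')"
    and "(\<Sum>y'\<in>spins S. hh E B S x lam y') \<ge> 1"
    and "\<forall>y. hh E B S x lam y \<ge> 0"
proof -
  have finV: "finite V" using graph by (simp add: simple_graph_def)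
  have finS: "finite S" "finite B" using finV BV S_def finite_subset by auto
  have finSp: "finite (spins S)" unfolding spins_def using finS by (intro finite_PiE) auto
  define mrg where "mrg = (\<lambda>y v. if v \<in> B then x v else y v)"
  define Xp where "Xp = {v\<in>B. x v = 1}"
  define Yp where "Yp = (\<lambda>y. {v\<in>S. y v = (1::int)})"
  define A where "A = {\<sigma> \<in> spins V. restrict \<sigma> B = x}"
  have VBS: "V = B \<union> S" "B \<inter> S = {}" using BV S_def by auto
  have mrg_sp: "mrg y \<in> spins V" if "y \<in> spins S" for y
    using that x unfolding spins_def mrg_def VBS(1) by (auto simp: PiE_def extensional_def Pi_def)
  have mrg_B: "restrict (mrg y) B = x" if "y \<in> spins S" for y
    using x unfolding spins_def mrg_def by (auto simp: PiE_def extensional_def restrict_def)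
  have mrg_S: "restrict (mrg y) S = y" if "y \<in> spins S" for y
    using that VBS(2) unfolding spins_def mrg_def by (fastforce simp: PiE_def extensional_def restrict_def)
  have mrg_inv: "\<sigma> = mrg (restrict \<sigma> S) \<and> restrict \<sigma> S \<in> spins S" if "\<sigma> \<in> A" for \<sigma>
  proof -
    have s: "\<sigma> \<in> spins V" "restrict \<sigma> B = x" using that A_def by auto
    have "\<sigma> v = mrg (restrict \<sigma> S) v" for v
    proof (cases "v \<in> B")
      case True then show ?thesis using s(2) unfolding mrg_def by (metis restrict_apply')
    next
      case False then show ?thesis using s(1) unfolding mrg_def spins_def VBS(1)
        by (auto simp: PiE_def extensional_def)
    qed
    moreover have "restrict \<sigma> S \<in> spins S" using s(1) unfolding spins_def VBS(1) by auto
    ultimately show ?thesis by auto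
  qed
  have bij: "bij_betw mrg (spins S) A"
  proof (rule bij_betw_byWitness[where f' = "\<lambda>\<sigma>. restrict \<sigma> S"])
    show "\<forall>y\<in>spins S. restrict (mrg y) S = y" using mrg_S by auto
    show "\<forall>\<sigma>\<in>A. mrg (restrict \<sigma> S) = \<sigma>" using mrg_inv by auto
    show "mrg ` spins S \<subseteq> A" using mrg_sp mrg_B A_def by auto
    show "(\<lambda>\<sigma>. restrict \<sigma> S) ` A \<subseteq> spins S" using mrg_inv by auto
  qed
  have marg: "marginal V \<mu> B x = (\<Sum>y\<in>spins S. \<mu> (mrg y))" for \<mu>
    unfolding marginal_def A_def[symmetric] using sum.reindex_bij_betw[OF bij, of \<mu>] by simp
  have numer: "{\<sigma> \<in> spins V. restrict \<sigma> B = x \<and> restrict \<sigma> S = y} = {mrg y}" if "y \<in> spins S" for y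
  proof -
    have "{\<sigma> \<in> spins V. restrict \<sigma> B = x \<and> restrict \<sigma> S = y} = {\<sigma> \<in> A. restrict \<sigma> S = y}"
      unfolding A_def by auto
    also have "\<dots> = {mrg y}" using mrg_inv mrg_sp mrg_B mrg_S that A_def by auto
    finally show ?thesis .
  qed
  have plus: "{v \<in> V. mrg y v = 1} = Xp \<union> Yp y" for y
    unfolding Xp_def Yp_def mrg_def VBS(1) using VBS(2) by auto
  have wt: "hc_weight V E lam (mrg y) = prod lam Xp * hh E B S x lam y" for y
  proof -
    have "finite Xp" "finite (Yp y)" "Xp \<inter> Yp y = {}" using finS VBS(2) unfolding Xp_def Yp_def by auto
    then have "prod lam (Xp \<union> Yp y) = prod lam Xp * prod lam (Yp y)" by (rule prod.union_disjoint)
    then show ?thesis unfolding hc_weight_def plus hh_def Xp_def[symmetric] Yp_def by simp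
  qed
  have hnn: "\<forall>y. hh E B S x lam y \<ge> 0"
    unfolding hh_def using pos S_def by (auto intro!: prod_nonneg)
  then show "\<forall>y. hh E B S x lam y \<ge> 0" .
  have CP: "prod lam Xp > 0" using pos BV unfolding Xp_def by (auto intro!: prod_pos)
  define Z where "Z = hc_partition V E lam"
  have gib: "gibbs V E lam (mrg y) = prod lam Xp * hh E B S x lam y / Z" for y
    unfolding gibbs_def Z_def wt ..
  have Z0: "Z \<noteq> 0"
  proof
    assume "Z = 0"
    then have "marginal V (gibbs V E lam) B x = 0" unfolding marg gib by simp
    then show False using supp by simp
  qed
  define H where "H = (\<Sum>y'\<in>spins S. hh E B S x lam y')"
  have margH: "marginal V (gibbs V E lam) B x = prod lam Xp * H / Z"
    unfolding marg gib H_def by (simp add: sum_divide_distrib sum_distrib_left)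
  show "\<forall>y\<in>spins S. conditional V (gibbs V E lam) B x S y = hh E B S x lam y / (\<Sum>y'\<in>spins S. hh E B S x lam y')"
  proof
    fix y assume y: "y \<in> spins S"
    have "conditional V (gibbs V E lam) B x S y = gibbs V E lam (mrg y) / marginal V (gibbs V E lam) B x"
      unfolding conditional_def numer[OF y] by simp
    also have "\<dots> = hh E B S x lam y / H" unfolding gib margH using Z0 CP by (simp add: field_simps)
    finally show "conditional V (gibbs V E lam) B x S y = hh E B S x lam y / (\<Sum>y'\<in>spins S. hh E B S x lam y')"
      unfolding H_def .
  qed
  have Hpos: "H \<noteq> 0" using supp margH by auto
  then obtain y1 where y1: "y1 \<in> spins S" "hh E B S x lam y1 \<noteq> 0" unfolding H_def
    by (meson sum.neutral)
  then have indXY: "indep_set E (Xp \<union> Yp y1)" unfolding hh_def Xp_def Yp_def by (auto split: if_splits)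
  define y0 where "y0 = (\<lambda>v. if v \<in> S then (-1::int) else undefined)"
  have y0: "y0 \<in> spins S" unfolding y0_def spins_def by auto
  have e0: "{v\<in>S. y0 v = 1} = {}" unfolding y0_def by auto
  have "indep_set E Xp" using indXY by (auto simp: indep_set_def)
  then have h0: "hh E B S x lam y0 = 1" unfolding hh_def e0 Xp_def by simp
  have "hh E B S x lam y0 \<le> H" unfolding H_def using y0 finSp hnn by (intro member_le_sum) auto
  then show "(\<Sum>y'\<in>spins S. hh E B S x lam y') \<ge> 1" using h0 H_def by simp
qed

theorem lemma5p6:
  fixes V :: "'v set" and E :: "'v \<Rightarrow> 'v \<Rightarrow> bool"
    and lam_mu lam_nu :: "'v \<Rightarrow> real" and eps eta :: real
  assumes graph: "simple_graph V E"
    and Delta: "max_degree V E \<ge> 3"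
    and eta: "0 < eta" "eta < 1"
    and eps: "0 < eps" "eps < 1"
    and pos_mu: "\<forall>v\<in>V. lam_mu v > 0"
    and pos_nu: "\<forall>v\<in>V. lam_nu v > 0"
    and uniq_mu: "uniqueness V E eta lam_mu"
    and uniq_nu: "uniqueness V E eta lam_nu"
    and close: "d_par V lam_mu lam_nu
                  < 10 powr (-10) * eps powr (1/4) / real (card V) powr (5/2)"
    and B_def: "B = {v \<in> V. min (lam_mu v) (lam_nu v)
                   \<ge> 10 powr (-9) * eps powr (1/4) / real (card V) powr (3/2)}"
    and S_def: "S = V - B"
    and x: "x \<in> spins B"
    and supp: "marginal V (gibbs V E lam_mu) B x > 0" "marginal V (gibbs V E lam_nu) B x > 0"
  shows "dtv (spins S) (conditional V (gibbs V E lam_nu) B x S)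
                       (conditional V (gibbs V E lam_mu) B x S)
           \<le> 4 * real (card V) * d_par V lam_mu lam_nu"
proof -
  define D where "D = d_par V lam_mu lam_nu"
  define n where "n = card V"
  define e4 where "e4 = eps powr (1/4)"
  define K9 where "K9 = (10::real) powr (-9)"
  define K10 where "K10 = (10::real) powr (-10)"
  define kap where "kap = K9 * e4 / real n powr (3/2)"
  have finV: "finite V" using graph by (simp add: simple_graph_def)
  have BV: "B \<subseteq> V" using B_def by auto
  have SV: "S \<subseteq> V" using S_def by auto
  have finS: "finite S" using finV SV finite_subset by auto
  have finSp: "finite (spins S)" unfolding spins_def using finS by (intro finite_PiE) auto
  note Rnu = cond_repr[OF graph BV S_def x pos_nu supp(2)]
  note Rmu = cond_repr[OF graph BV S_def x pos_mu supp(1)]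
  define hn where "hn = hh E B S x lam_nu"
  define hm where "hm = hh E B S x lam_mu"
  define Yp where "Yp = (\<lambda>y. {v\<in>S. y v = (1::int)})"
  define T where "T = (\<Sum>Y\<in>Pow S. \<bar>prod lam_nu Y - prod lam_mu Y\<bar>)"
  have inj: "inj_on Yp (spins S)"
  proof (rule inj_onI)
    fix y y' assume yy: "y \<in> spins S" "y' \<in> spins S" "Yp y = Yp y'"
    show "y = y'"
    proof
      fix v show "y v = y' v"
      proof (cases "v \<in> S")
        case True
        then have "y v \<in> {-1,1}" "y' v \<in> {-1,1}" using yy(1,2) unfolding spins_def by auto
        moreover have "(y v = 1) = (y' v = 1)" using yy(3) True unfolding Yp_def by blast
        ultimately show ?thesis by auto
      next
        case False then show ?thesis using yy(1,2) unfolding spins_def by (auto simp: PiE_def extensional_def)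
      qed
    qed
  qed
  have "dtv (spins S) (conditional V (gibbs V E lam_nu) B x S) (conditional V (gibbs V E lam_mu) B x S)
      = 1/2 * (\<Sum>y\<in>spins S. \<bar>hn y / sum hn (spins S) - hm y / sum hm (spins S)\<bar>)"
    unfolding dtv_def hn_def hm_def using Rnu(1) Rmu(1) by (intro arg_cong[where f="\<lambda>t. 1/2 * t"] sum.cong) auto
  also have "\<dots> \<le> (\<Sum>y\<in>spins S. \<bar>hn y - hm y\<bar>)"
  proof (rule tv_bound[OF finSp])
    show "\<forall>w\<in>spins S. 0 \<le> hm w" using Rmu(3) unfolding hm_def by auto
    show "1 \<le> sum hn (spins S)" using Rnu(2) unfolding hn_def by auto
    show "0 < sum hm (spins S)" using Rmu(2) unfolding hm_def by auto
  qed
  also have "\<dots> \<le> (\<Sum>y\<in>spins S. \<bar>prod lam_nu (Yp y) - prod lam_mu (Yp y)\<bar>)"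
    unfolding hn_def hm_def hh_def Yp_def by (intro sum_mono) auto
  also have "\<dots> = (\<Sum>Y\<in>Yp ` spins S. \<bar>prod lam_nu Y - prod lam_mu Y\<bar>)"
    using inj by (simp add: sum.reindex)
  also have "\<dots> \<le> T"
    unfolding T_def using finS by (intro sum_mono2) (auto simp: Yp_def)
  finally have main: "dtv (spins S) (conditional V (gibbs V E lam_nu) B x S) (conditional V (gibbs V E lam_mu) B x S) \<le> T" .
  have Dge: "\<bar>lam_mu v - lam_nu v\<bar> \<le> D" if "v \<in> V" for v
    unfolding D_def d_par_def using finV that by (intro Max_ge) auto
  show ?thesis
  proof (cases "S = {}")
    case True
    then have "T = 0" unfolding T_def by simp
    moreover have "0 \<le> 4 * real (card V) * d_par V lam_mu lam_nu"
    proof (cases "V = {}")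
      case True then show ?thesis by simp
    next
      case False then obtain v where "v \<in> V" by auto
      then have "0 \<le> D" using Dge[of v] by linarith
      then show ?thesis unfolding D_def by simp
    qed
    ultimately show ?thesis using main by linarith
  next
    case False
    then obtain v0 where v0: "v0 \<in> S" by auto
    then have D0: "0 \<le> D" using Dge[of v0] SV by force
    have Vne: "V \<noteq> {}" using v0 SV by auto
    then have n1: "real n \<ge> 1" unfolding n_def using finV by (simp add: Suc_le_eq card_gt_0_iff)
    have mn: "real (card S) \<le> real n" unfolding n_def using finV SV by (simp add: card_mono)
    have e4: "0 \<le> e4" "e4 \<le> 1" unfolding e4_def using eps by (auto intro: powr_le1)
    have K9: "0 \<le> K9" "K9 \<le> 1/2" unfolding K9_def by (simp_all add: powr_minus_divide)
    have K10: "0 \<le> K10" "K10 \<le> 1/2" unfolding K10_def by (simp_all add: powr_minus_divide)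
    have K9e: "K9 * e4 \<le> 1/2" using K9 e4 mult_left_mono[of e4 1 K9] by linarith
    have K10e: "K10 * e4 \<le> 1/2" using K10 e4 mult_left_mono[of e4 1 K10] by linarith
    have n32: "real n \<le> real n powr (3/2)" using powr_mono[of 1 "3/2" "real n"] n1 by (simp add: powr_one)
    have n52: "real n \<le> real n powr (5/2)" using powr_mono[of 1 "5/2" "real n"] n1 by (simp add: powr_one)
    have kap0: "0 \<le> kap" unfolding kap_def using e4 K9 by auto
    have kapn: "kap * real n \<le> 1/2"
    proof -
      have "kap \<le> (1/2) / real n powr (3/2)" unfolding kap_def using K9e n1
        by (intro divide_right_mono) auto
      also have "\<dots> \<le> (1/2) / real n" using n32 n1 by (intro divide_left_mono) auto
      finally show ?thesis using n1 by (simp add: field_simps)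
    qed
    have Dn: "D * real n \<le> 1/2"
    proof -
      have "D \<le> K10 * e4 / real n powr (5/2)" using close unfolding D_def K10_def e4_def n_def by simp
      also have "\<dots> \<le> (1/2) / real n powr (5/2)" using K10e n1
        by (intro divide_right_mono) auto
      also have "\<dots> \<le> (1/2) / real n" using n52 n1 by (intro divide_left_mono) auto
      finally show ?thesis using n1 by (simp add: field_simps)
    qed
    define c where "c = kap + D"
    have c0: "0 \<le> c" using kap0 D0 c_def by simp
    have bnd: "\<forall>v\<in>S. 0 \<le> lam_nu v \<and> lam_nu v \<le> c \<and> 0 \<le> lam_mu v \<and> lam_mu v \<le> c \<and> \<bar>lam_nu v - lam_mu v\<bar> \<le> D"
    proof
      fix v assume v: "v \<in> S"
      then have vV: "v \<in> V" and vB: "v \<notin> B" using S_def by auto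
      then have "min (lam_mu v) (lam_nu v) < kap" using B_def unfolding kap_def K9_def e4_def n_def by auto
      moreover have "\<bar>lam_mu v - lam_nu v\<bar> \<le> D" using Dge vV by auto
      moreover have "0 < lam_mu v" "0 < lam_nu v" using pos_mu pos_nu vV by auto
      ultimately show "0 \<le> lam_nu v \<and> lam_nu v \<le> c \<and> 0 \<le> lam_mu v \<and> lam_mu v \<le> c \<and> \<bar>lam_nu v - lam_mu v\<bar> \<le> D"
        unfolding c_def by (auto simp: min_def split: if_splits)
    qed
    have TB: "T \<le> real (card S) * D * (1+c)^card S"
      unfolding T_def using pow_sum_bound[OF finS bnd D0 c0] .
    have cm: "real (card S) * c \<le> 1"
    proof -
      have "real (card S) * c \<le> real n * c" using mn c0 by (intro mult_right_mono) auto
      also have "\<dots> = kap * real n + D * real n" unfolding c_def by (simp add: algebra_simps)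
      also have "\<dots> \<le> 1/2 + 1/2" using kapn Dn by linarith
      finally show ?thesis by simp
    qed
    have "(1+c)^card S \<le> exp c ^ card S" using c0 by (intro power_mono) auto
    also have "\<dots> = exp (real (card S) * c)" by (simp add: exp_of_nat_mult)
    also have "\<dots> \<le> exp 1" using cm by simp
    also have "\<dots> \<le> 3" by (rule exp_le)
    finally have P3: "(1+c)^card S \<le> 3" .
    have "T \<le> real (card S) * D * (1+c)^card S" by (rule TB)
    also have "\<dots> \<le> real n * D * 3"
      using mn D0 P3 c0 by (intro mult_mono) (auto intro: mult_nonneg_nonneg)
    also have "\<dots> \<le> 4 * real n * D" using D0 n1 by simp
    finally show ?thesis using main unfolding D_def n_def by linarith
  qed
qed

end
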